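(* Let $k\geq 2$ and let $U$ be an $n\times n$ unitary matrix with entries in $\mathcal{R}_{2^k}$. Then \[\det\nolimits_{\mathcal{R}_{2^{k-1}}}(\phi_k(U))=\det\nolimits_{\mathcal{R}_{2^{k-1}}}\big(\phi_k(\det\nolimits_{\mathcal{R}_{2^k}}(U))\big).\]
   Context: $\zeta_n=e^{2\pi i/n}$ and $\mathcal{R}_n$ is the smallest subring of $\mathbb{C}$ containing $1/2$ and $\zeta_n$. For $k\ge2$, every matrix $M$ with entries in $\mathcal{R}_{2^k}$ can be uniquely written as $M=A+B\zeta_{2^k}$ with $A,B$ matrices over $\mathcal{R}_{2^{k-1}}$; define $\phi_k(M)=A\otimes I_2+B\otimes\Lambda_k$, where $\Lambda_k=\begin{bmatrix}0&1\\ \zeta_{2^{k-1}}&0\end{bmatrix}$. In particular for a scalar $u\in\mathcal{R}_{2^k}$, $\phi_k(u)$ is a $2\times 2$ matrix over $\mathcal{R}_{2^{k-1}}$. $\det_R$ denotes the determinant computed over the ring $R$. *)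

theory Defs
  imports Complex_Main "Jordan_Normal_Form.Schur_Decomposition"
begin

definition zeta :: "nat \<Rightarrow> complex" where
  "zeta n = cis (2 * pi / real n)"

inductive_set Rring :: "nat \<Rightarrow> complex set" for n :: nat where
  one: "1 \<in> Rring n"
| half: "1/2 \<in> Rring n"
| zeta: "zeta n \<in> Rring n"
| add: "x \<in> Rring n \<Longrightarrow> y \<in> Rring n \<Longrightarrow> x + y \<in> Rring n"
| neg: "x \<in> Rring n \<Longrightarrow> - x \<in> Rring n"
| mult: "x \<in> Rring n \<Longrightarrow> y \<in> Rring n \<Longrightarrow> x * y \<in> Rring n"

definition mat_over :: "complex set \<Rightarrow> complex mat \<Rightarrow> bool" where
  "mat_over S M \<longleftrightarrow> (\<forall>i < dim_row M. \<forall>j < dim_col M. M $$ (i, j) \<in> S)"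

definition kron :: "complex mat \<Rightarrow> complex mat \<Rightarrow> complex mat" where
  "kron A B = mat (dim_row A * dim_row B) (dim_col A * dim_col B)
     (\<lambda>(i, j). A $$ (i div dim_row B, j div dim_col B) * B $$ (i mod dim_row B, j mod dim_col B))"

definition Lambda :: "nat \<Rightarrow> complex mat" where
  "Lambda k = mat_of_rows_list 2 [[0, 1], [zeta (2^(k-1)), 0]]"

definition phi :: "nat \<Rightarrow> complex mat \<Rightarrow> complex mat" where
  "phi k M = (THE P. \<exists>A B. A \<in> carrier_mat (dim_row M) (dim_col M) \<and>
       B \<in> carrier_mat (dim_row M) (dim_col M) \<and>
       mat_over (Rring (2^(k-1))) A \<and> mat_over (Rring (2^(k-1))) B \<and>
       M = A + zeta (2^k) \<cdot>\<^sub>m B \<and>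
       P = kron A (1\<^sub>m 2) + kron B (Lambda k))"

definition unitary_mat :: "complex mat \<Rightarrow> bool" where
  "unitary_mat U \<longleftrightarrow> U \<in> carrier_mat (dim_row U) (dim_row U) \<and>
     mat_adjoint U * U = 1\<^sub>m (dim_row U) \<and> U * mat_adjoint U = 1\<^sub>m (dim_row U)"

end

theory Submission
  imports Defs "Berlekamp_Zassenhaus.Factor_Bound"
begin

interpretation of_rat_cpoly_hom: map_poly_idom_hom "of_rat :: rat \<Rightarrow> complex" ..

lemma two_pow_choose_even: assumes "0 < i" "i < 2^j" shows "even ((2^j) choose i)"
proof (rule ccontr)
  assume o: "odd ((2^j) choose i)"
  have "i * ((2^j) choose i) = 2^j * ((2^j - 1) choose (i - 1))" using times_binomial_minus1_eq[OF assms(1)] .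
  hence "2^j dvd i * ((2^j) choose i)" by simp
  moreover have "coprime ((2::nat)^j) ((2^j) choose i)" using o by simp
  ultimately have "2^j dvd i" by (simp add: coprime_dvd_mult_left_iff)
  with assms show False by (simp add: nat_dvd_not_less)
qed

lemma eis_aux:
  fixes P q r :: "int poly"
  assumes Pqr: "P = q * r" and dq: "degree q < degree P"
    and ev: "\<forall>i<degree P. even (poly.coeff P i)" and lo: "odd (lead_coeff P)"
    and q0: "even (poly.coeff q 0)" and r0: "odd (poly.coeff r 0)"
  shows False
proof -
  have evq: "even (poly.coeff q i)" if "i \<le> degree q" for i
    using that
  proof (induction i rule: less_induct)
    case (less i)
    let ?f = "\<lambda>l. poly.coeff q l * poly.coeff r (i - l)"
    have "poly.coeff P i = (\<Sum>l\<le>i. ?f l)" using Pqr coeff_mult by simp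
    also have "\<dots> = (\<Sum>l<Suc i. ?f l)" by (simp only: lessThan_Suc_atMost)
    also have "\<dots> = ?f i + (\<Sum>l<i. ?f l)" by (simp only: sum.lessThan_Suc add.commute)
    finally have e: "poly.coeff P i = ?f i + (\<Sum>l<i. ?f l)" .
    have "even (poly.coeff P i)" using ev less.prems dq by auto
    moreover have "even (\<Sum>l<i. ?f l)"
      by (rule dvd_sum) (use less in auto)
    ultimately have "even (?f i)" using e by (metis dvd_add_left_iff)
    thus ?case using r0 by simp
  qed
  have "even (lead_coeff q)" using evq by simp
  moreover have "lead_coeff P = lead_coeff q * lead_coeff r" using Pqr lead_coeff_mult by simp
  ultimately show False using lo by simp
qed

lemma eisenstein2:
  fixes P :: "int poly"
  assumes d: "0 < degree P" and ev: "\<forall>i<degree P. even (poly.coeff P i)"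
    and lo: "odd (lead_coeff P)" and n4: "\<not> 4 dvd poly.coeff P 0"
  shows "irreducible\<^sub>d P"
  unfolding irreducible\<^sub>d_def
proof (intro conjI d allI impI notI)
  fix q r assume dq: "degree q < degree P" and dr: "degree r < degree P" and Pqr: "P = q * r"
  have c0: "poly.coeff P 0 = poly.coeff q 0 * poly.coeff r 0" using Pqr by (simp add: coeff_mult_0)
  have "even (poly.coeff P 0)" using ev d by auto
  hence "even (poly.coeff q 0) \<or> even (poly.coeff r 0)" using c0 by simp
  moreover have "\<not> (even (poly.coeff q 0) \<and> even (poly.coeff r 0))"
  proof
    assume "even (poly.coeff q 0) \<and> even (poly.coeff r 0)"
    then have "4 dvd poly.coeff q 0 * poly.coeff r 0" by (auto elim!: evenE)
    thus False using n4 c0 by simp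
  qed
  ultimately show False
  proof (elim disjE)
    assume "even (poly.coeff q 0)"
    hence "odd (poly.coeff r 0)" using \<open>\<not> (_ \<and> _)\<close> by auto
    thus False using eis_aux[OF Pqr dq ev lo \<open>even (poly.coeff q 0)\<close>] by simp
  next
    assume "even (poly.coeff r 0)"
    hence "odd (poly.coeff q 0)" using \<open>\<not> (_ \<and> _)\<close> by auto
    have Prq: "P = r * q" using Pqr by (simp add: mult.commute)
    thus False using eis_aux[OF Prq dr ev lo \<open>even (poly.coeff r 0)\<close> \<open>odd (poly.coeff q 0)\<close>] by simp
  qed
qed

lemma Gi_irr: "irreducible\<^sub>d ([:0,1:]^(2^j) + 1 :: int poly)"
proof -
  define s :: "int poly" where "s = [:1,1:]"
  define Pi where "Pi = s^(2^j) + 1"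
  have cf: "poly.coeff Pi i = int ((2^j) choose i) + (if i = 0 then 1 else 0)" if "i \<le> 2^j" for i
    using that coeff_linear_poly_power[of i "2^j" "1::int" 1] unfolding Pi_def s_def
    by (simp add: coeff_1)
  have degs: "degree (s^(2^j)) = 2^j" unfolding s_def using degree_linear_power[of "1::int" "2^j"] by simp
  have dP: "degree Pi = 2^j" unfolding Pi_def using degs by (simp add: degree_add_eq_left)
  have irrP: "irreducible\<^sub>d Pi"
  proof (rule eisenstein2)
    show "0 < degree Pi" using dP by simp
    show "\<forall>i<degree Pi. even (poly.coeff Pi i)"
    proof (intro allI impI)
      fix i assume "i < degree Pi"
      hence i: "i < 2^j" using dP by simp
      show "even (poly.coeff Pi i)"
      proof (cases "i = 0")
        case True thus ?thesis using cf[of 0] by simp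
      next
        case False
        hence "even ((2^j) choose i)" using two_pow_choose_even i by simp
        thus ?thesis using cf[of i] i False by simp
      qed
    qed
    show "odd (lead_coeff Pi)" using cf[of "2^j"] dP by simp
    show "\<not> 4 dvd poly.coeff Pi 0" using cf[of 0] by simp
  qed
  show ?thesis unfolding irreducible\<^sub>d_def
  proof (intro conjI allI impI notI)
    have dG: "degree ([:0,1:]^(2^j) + 1 :: int poly) = 2^j"
      using degree_linear_power[of "0::int" "2^j"] by (simp add: degree_add_eq_left)
    show "0 < degree ([:0,1:]^(2^j) + 1 :: int poly)" using dG by simp
    fix q r :: "int poly"
    assume dq: "degree q < degree ([:0,1:]^(2^j) + 1 :: int poly)"
      and dr: "degree r < degree ([:0,1:]^(2^j) + 1 :: int poly)"
      and G: "[:0,1:]^(2^j) + 1 = q * r"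
    have "Pi = ([:0,1:]^(2^j) + 1) \<circ>\<^sub>p s" unfolding Pi_def
      by (simp add: pcompose_add pcompose_hom.hom_power pcompose_pCons)
    also have "\<dots> = (q \<circ>\<^sub>p s) * (r \<circ>\<^sub>p s)" by (simp only: G pcompose_mult)
    finally have "Pi = (q \<circ>\<^sub>p s) * (r \<circ>\<^sub>p s)" .
    moreover have "degree (q \<circ>\<^sub>p s) < degree Pi" "degree (r \<circ>\<^sub>p s) < degree Pi"
      using dq dr dG dP by (simp_all add: degree_pcompose s_def)
    ultimately show False using irrP unfolding irreducible\<^sub>d_def by blast
  qed
qed

lemma G_irr: "irreducible ([:0,1:]^(2^j) + 1 :: rat poly)"
proof -
  have "irreducible\<^sub>d (map_poly rat_of_int ([:0,1:]^(2^j) + 1))"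
    by (rule irreducible\<^sub>d_int_rat[OF Gi_irr])
  hence "irreducible\<^sub>d ([:0,1:]^(2^j) + 1 :: rat poly)"
    by (simp add: of_int_poly_hom.hom_power of_int_poly_hom.hom_add)
  thus ?thesis by (simp add: irreducible_connect_field)
qed


abbreviation ofrp :: "rat poly \<Rightarrow> complex poly" where "ofrp \<equiv> map_poly of_rat"

lemma key_indep:
  fixes P Q :: "rat poly" and z :: complex
  assumes j: "1 \<le> j" and zm: "z^(2^j) = -1" and z0: "z \<noteq> 0"
    and eq: "poly (ofrp P) (z^2) + z * poly (ofrp Q) (z^2) = 0"
  shows "poly (ofrp P) (z^2) = 0 \<and> poly (ofrp Q) (z^2) = 0"
proof -
  define H where "H = P \<circ>\<^sub>p [:0,0,1:] + [:0,1:] * (Q \<circ>\<^sub>p [:0,0,1:])"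
  have evH: "poly (ofrp H) x = poly (ofrp P) (x^2) + x * poly (ofrp Q) (x^2)" for x
    unfolding H_def by (simp add: of_rat_hom.map_poly_pcompose of_rat_hom.map_poly_hom_add of_rat_hom.map_poly_pCons_hom poly_pcompose power2_eq_square)
  define G :: "rat poly" where "G = [:0,1:]^(2^j) + 1"
  have evG: "poly (ofrp G) x = x^(2^j) + 1" for x
    unfolding G_def by (simp add: of_rat_hom.map_poly_hom_add of_rat_cpoly_hom.hom_power of_rat_hom.map_poly_pCons_hom)
  have irrG: "irreducible G" unfolding G_def by (rule G_irr)
  have Hz: "poly (ofrp H) z = 0" using evH eq by simp
  have Gz: "poly (ofrp G) z = 0" using evG zm by simp
  have "G dvd H"
  proof (rule ccontr)
    assume nd: "\<not> G dvd H"
    define g where "g = gcd G H"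
    have "g dvd G" unfolding g_def by simp
    then obtain e where Ge: "G = g * e" by (elim dvdE)
    from irreducibleD[OF irrG Ge] have "is_unit g \<or> is_unit e" .
    moreover have "\<not> is_unit e"
    proof
      assume "is_unit e"
      hence "G dvd g" using Ge by (simp add: mult_unit_dvd_iff')
      moreover have "g dvd H" unfolding g_def by simp
      ultimately show False using nd dvd_trans by blast
    qed
    ultimately have ug: "is_unit g" by blast
    then obtain c where gc: "g = [:c:]" and c0: "c \<noteq> 0"
      by (auto simp: is_unit_poly_iff elim!: degree_eq_zeroE)
    have "fst (bezout_coefficients G H) * G + snd (bezout_coefficients G H) * H = g"
      unfolding g_def by (rule bezout_coefficients_fst_snd)
    hence "poly (ofrp (fst (bezout_coefficients G H) * G + snd (bezout_coefficients G H) * H)) z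
          = poly (ofrp g) z" by simp
    hence "of_rat c = (0::complex)" using Hz Gz gc
      by (simp add: of_rat_hom.map_poly_hom_add of_rat_cpoly_hom.hom_mult of_rat_hom.map_poly_pCons_hom)
    thus False using c0 by simp
  qed
  then obtain K where HK: "H = G * K" by (elim dvdE)
  have ev2: "even ((2::nat)^j)" using j by simp
  have "poly (ofrp H) (-z) = 0" using HK evG zm ev2 by (simp add: of_rat_cpoly_hom.hom_mult)
  hence m: "poly (ofrp P) (z^2) - z * poly (ofrp Q) (z^2) = 0" using evH[of "-z"] by simp
  from eq m have "2 * poly (ofrp P) (z^2) = 0" by (simp add: algebra_simps)
  moreover from eq m have "2 * z * poly (ofrp Q) (z^2) = 0" by (simp add: algebra_simps)
  ultimately show ?thesis using z0 by simp
qed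

lemma zeta_nz: "zeta n \<noteq> 0" by (simp add: zeta_def)

lemma zeta_sq: assumes "1 \<le> k" shows "zeta (2^k) ^ 2 = zeta (2^(k-1))"
proof -
  obtain k' where k: "k = Suc k'" using assms by (cases k) auto
  show ?thesis unfolding zeta_def DeMoivre k by (simp add: field_simps)
qed

lemma zeta_half: assumes "1 \<le> k" shows "zeta (2^k) ^ (2^(k-1)) = -1"
proof -
  obtain k' where k: "k = Suc k'" using assms by (cases k) auto
  have "real (2^k') * (2 * pi / real (2^Suc k')) = pi" by (simp add: field_simps)
  thus ?thesis unfolding zeta_def DeMoivre k by simp
qed

lemma R0: "0 \<in> Rring n" using Rring.add[OF Rring.one Rring.neg[OF Rring.one]] by simp
lemma Rsub: "x \<in> Rring n \<Longrightarrow> y \<in> Rring n \<Longrightarrow> x - y \<in> Rring n"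
proof -
  assume "x \<in> Rring n" "y \<in> Rring n"
  hence "x + - y \<in> Rring n" by (intro Rring.add Rring.neg)
  thus ?thesis by simp
qed
lemma Rm1: "-1 \<in> Rring n" by (rule Rring.neg[OF Rring.one])

lemma Rsum: "finite S \<Longrightarrow> (\<And>x. x \<in> S \<Longrightarrow> f x \<in> Rring n) \<Longrightarrow> sum f S \<in> Rring n"
  by (induction S rule: finite_induct) (auto intro: R0 Rring.add)
lemma Rprod: "finite S \<Longrightarrow> (\<And>x. x \<in> S \<Longrightarrow> f x \<in> Rring n) \<Longrightarrow> prod f S \<in> Rring n"
  by (induction S rule: finite_induct) (auto intro: Rring.one Rring.mult)

lemma signof_cases: "(signof p :: complex) = 1 \<or> (signof p :: complex) = -1"
  by (simp add: sign_def)

lemma Rsignof: "(signof p :: complex) \<in> Rring n"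
  using signof_cases[of p] Rring.one Rm1 by metis

lemma R_incl: assumes "1 \<le> k" "x \<in> Rring (2^(k-1))" shows "x \<in> Rring (2^k)"
  using assms(2)
proof (induction rule: Rring.induct)
  case zeta
  have "zeta (2^(k-1)) = zeta (2^k) * zeta (2^k)" using zeta_sq[OF assms(1)] by (simp add: power2_eq_square)
  thus ?case by (simp add: Rring.mult Rring.zeta)
qed (auto intro: Rring.intros)

lemma R_rep: "x \<in> Rring n \<Longrightarrow> \<exists>p. x = poly (ofrp p) (zeta n)"
proof (induction rule: Rring.induct)
  case one show ?case by (rule exI[of _ 1]) simp
next
  case half show ?case by (rule exI[of _ "[:1/2:]"]) (simp add: of_rat_hom.map_poly_pCons_hom of_rat_divide)
next
  case zeta show ?case by (rule exI[of _ "[:0,1:]"]) (simp add: of_rat_hom.map_poly_pCons_hom)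
next
  case (add x y)
  then obtain p q where "x = poly (ofrp p) (zeta n)" "y = poly (ofrp q) (zeta n)" by blast
  thus ?case by (intro exI[of _ "p + q"]) (simp add: of_rat_hom.map_poly_hom_add)
next
  case (neg x)
  then obtain p where "x = poly (ofrp p) (zeta n)" by blast
  thus ?case by (intro exI[of _ "- p"]) (simp add: of_rat_cpoly_hom.hom_uminus)
next
  case (mult x y)
  then obtain p q where "x = poly (ofrp p) (zeta n)" "y = poly (ofrp q) (zeta n)" by blast
  thus ?case by (intro exI[of _ "p * q"]) (simp add: of_rat_cpoly_hom.hom_mult)
qed

lemma decomp_ex: assumes k: "1 \<le> k" and x: "x \<in> Rring (2^k)"
  shows "\<exists>a b. a \<in> Rring (2^(k-1)) \<and> b \<in> Rring (2^(k-1)) \<and> x = a + zeta (2^k) * b"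
  using x
proof (induction rule: Rring.induct)
  case one show ?case using Rring.one R0 by fastforce
next
  case half show ?case using Rring.half R0 by fastforce
next
  case zeta show ?case using Rring.one R0 by fastforce
next
  case (add x y)
  then obtain a b c d where "a \<in> Rring (2^(k-1))" "b \<in> Rring (2^(k-1))" "x = a + zeta (2^k) * b"
    "c \<in> Rring (2^(k-1))" "d \<in> Rring (2^(k-1))" "y = c + zeta (2^k) * d" by blast
  thus ?case by (intro exI[of _ "a + c"] exI[of _ "b + d"]) (auto intro: Rring.add simp: algebra_simps)
next
  case (neg x)
  then obtain a b where "a \<in> Rring (2^(k-1))" "b \<in> Rring (2^(k-1))" "x = a + zeta (2^k) * b" by blast
  thus ?case by (intro exI[of _ "- a"] exI[of _ "- b"]) (auto intro: Rring.neg simp: algebra_simps)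
next
  case (mult x y)
  then obtain a b c d where ab: "a \<in> Rring (2^(k-1))" "b \<in> Rring (2^(k-1))" "x = a + zeta (2^k) * b"
    and cd: "c \<in> Rring (2^(k-1))" "d \<in> Rring (2^(k-1))" "y = c + zeta (2^k) * d" by blast
  have w: "zeta (2^k) * zeta (2^k) = zeta (2^(k-1))" using zeta_sq[OF k] by (simp add: power2_eq_square)
  have "x * y = (a * c + zeta (2^(k-1)) * (b * d)) + zeta (2^k) * (a * d + b * c)"
    using ab cd w by (simp add: algebra_simps)
  moreover have "a * c + zeta (2^(k-1)) * (b * d) \<in> Rring (2^(k-1))"
    using ab cd by (intro Rring.add Rring.mult Rring.zeta) auto
  moreover have "a * d + b * c \<in> Rring (2^(k-1))"
    using ab cd by (intro Rring.add Rring.mult) auto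
  ultimately show ?case by blast
qed

lemma decomp_uniq0: assumes k: "2 \<le> k" and a: "a \<in> Rring (2^(k-1))" and b: "b \<in> Rring (2^(k-1))"
  and eq: "a + zeta (2^k) * b = 0"
  shows "a = 0 \<and> b = 0"
proof -
  obtain P where P: "a = poly (ofrp P) (zeta (2^(k-1)))" using R_rep[OF a] by blast
  obtain Q where Q: "b = poly (ofrp Q) (zeta (2^(k-1)))" using R_rep[OF b] by blast
  have w: "zeta (2^(k-1)) = zeta (2^k) ^ 2" using zeta_sq k by simp
  have "poly (ofrp P) (zeta (2^k) ^ 2) = 0 \<and> poly (ofrp Q) (zeta (2^k) ^ 2) = 0"
    by (rule key_indep[of "k-1"]) (use k zeta_half[of k] zeta_nz eq P Q w in auto)
  thus ?thesis using P Q w by simp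
qed

lemma decomp_uniq: assumes k: "2 \<le> k" and "a \<in> Rring (2^(k-1))" "b \<in> Rring (2^(k-1))"
  "c \<in> Rring (2^(k-1))" "d \<in> Rring (2^(k-1))" and eq: "a + zeta (2^k) * b = c + zeta (2^k) * d"
  shows "a = c \<and> b = d"
proof -
  have "(a - c) + zeta (2^k) * (b - d) = 0" using eq by (simp add: algebra_simps)
  from decomp_uniq0[OF k Rsub Rsub this] assms show ?thesis by simp
qed

definition pab :: "nat \<Rightarrow> complex \<Rightarrow> complex \<times> complex" where
  "pab k x = (THE ab. fst ab \<in> Rring (2^(k-1)) \<and> snd ab \<in> Rring (2^(k-1)) \<and> x = fst ab + zeta (2^k) * snd ab)"

definition sig :: "nat \<Rightarrow> complex \<Rightarrow> complex" where
  "sig k x = fst (pab k x) - zeta (2^k) * snd (pab k x)"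

lemma pab_eq: assumes k: "2 \<le> k" and a: "a \<in> Rring (2^(k-1))" and b: "b \<in> Rring (2^(k-1))"
  shows "pab k (a + zeta (2^k) * b) = (a, b)"
  unfolding pab_def
proof (rule the_equality)
  fix ab assume "fst ab \<in> Rring (2^(k-1)) \<and> snd ab \<in> Rring (2^(k-1)) \<and> a + zeta (2^k) * b = fst ab + zeta (2^k) * snd ab"
  with decomp_uniq[OF k a b] show "ab = (a, b)" by (cases ab) auto
qed (use a b in auto)

lemma sig_eq: assumes k: "2 \<le> k" and a: "a \<in> Rring (2^(k-1))" and b: "b \<in> Rring (2^(k-1))"
  shows "sig k (a + zeta (2^k) * b) = a - zeta (2^k) * b"
  unfolding sig_def pab_eq[OF assms] by simp

lemma decomp_obtain: assumes k: "2 \<le> k" and x: "x \<in> Rring (2^k)"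
  obtains a b where "a \<in> Rring (2^(k-1))" "b \<in> Rring (2^(k-1))" "x = a + zeta (2^k) * b"
  using decomp_ex[OF _ x] k by fastforce

lemma pab_ok: assumes k: "2 \<le> k" and x: "x \<in> Rring (2^k)"
  shows "fst (pab k x) \<in> Rring (2^(k-1)) \<and> snd (pab k x) \<in> Rring (2^(k-1)) \<and> x = fst (pab k x) + zeta (2^k) * snd (pab k x)"
proof -
  obtain a b where ab: "a \<in> Rring (2^(k-1))" "b \<in> Rring (2^(k-1))" "x = a + zeta (2^k) * b"
    using decomp_obtain[OF k x] .
  show ?thesis using pab_eq[OF k ab(1,2)] ab by simp
qed

lemma sig_in: assumes k: "2 \<le> k" and x: "x \<in> Rring (2^k)" shows "sig k x \<in> Rring (2^k)"
proof -
  obtain a b where ab: "a \<in> Rring (2^(k-1))" "b \<in> Rring (2^(k-1))" "x = a + zeta (2^k) * b"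
    using decomp_obtain[OF k x] .
  have "a \<in> Rring (2^k)" "b \<in> Rring (2^k)" using ab R_incl k by auto
  thus ?thesis using sig_eq[OF k ab(1,2)] ab(3) by (auto intro!: Rsub Rring.mult Rring.zeta)
qed

lemma sig_add: assumes k: "2 \<le> k" and x: "x \<in> Rring (2^k)" and y: "y \<in> Rring (2^k)"
  shows "sig k (x + y) = sig k x + sig k y"
proof -
  obtain a b where ab: "a \<in> Rring (2^(k-1))" "b \<in> Rring (2^(k-1))" "x = a + zeta (2^k) * b"
    using decomp_obtain[OF k x] .
  obtain c d where cd: "c \<in> Rring (2^(k-1))" "d \<in> Rring (2^(k-1))" "y = c + zeta (2^k) * d"
    using decomp_obtain[OF k y] .
  have e: "x + y = (a + c) + zeta (2^k) * (b + d)" using ab cd by (simp add: algebra_simps)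
  have s1: "sig k (x + y) = (a + c) - zeta (2^k) * (b + d)"
    unfolding e by (rule sig_eq[OF k]) (use ab cd in \<open>auto intro: Rring.add\<close>)
  have s2: "sig k x = a - zeta (2^k) * b" unfolding ab(3) by (rule sig_eq[OF k ab(1,2)])
  have s3: "sig k y = c - zeta (2^k) * d" unfolding cd(3) by (rule sig_eq[OF k cd(1,2)])
  show ?thesis unfolding s1 s2 s3 by (simp add: algebra_simps)
qed

lemma sig_neg: assumes k: "2 \<le> k" and x: "x \<in> Rring (2^k)"
  shows "sig k (- x) = - sig k x"
proof -
  obtain a b where ab: "a \<in> Rring (2^(k-1))" "b \<in> Rring (2^(k-1))" "x = a + zeta (2^k) * b"
    using decomp_obtain[OF k x] .
  have e: "- x = (- a) + zeta (2^k) * (- b)" using ab by (simp add: algebra_simps)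
  have s1: "sig k (- x) = (- a) - zeta (2^k) * (- b)"
    unfolding e by (rule sig_eq[OF k]) (use ab in \<open>auto intro: Rring.neg\<close>)
  have s2: "sig k x = a - zeta (2^k) * b" unfolding ab(3) by (rule sig_eq[OF k ab(1,2)])
  show ?thesis unfolding s1 s2 by (simp add: algebra_simps)
qed

lemma sig_mult: assumes k: "2 \<le> k" and x: "x \<in> Rring (2^k)" and y: "y \<in> Rring (2^k)"
  shows "sig k (x * y) = sig k x * sig k y"
proof -
  obtain a b where ab: "a \<in> Rring (2^(k-1))" "b \<in> Rring (2^(k-1))" "x = a + zeta (2^k) * b"
    using decomp_obtain[OF k x] .
  obtain c d where cd: "c \<in> Rring (2^(k-1))" "d \<in> Rring (2^(k-1))" "y = c + zeta (2^k) * d"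
    using decomp_obtain[OF k y] .
  have w: "zeta (2^k) * zeta (2^k) = zeta (2^(k-1))" using zeta_sq[of k] k by (simp add: power2_eq_square)
  have e: "x * y = (a * c + zeta (2^(k-1)) * (b * d)) + zeta (2^k) * (a * d + b * c)"
    using ab cd w by (simp add: algebra_simps)
  have i1: "a * c + zeta (2^(k-1)) * (b * d) \<in> Rring (2^(k-1))"
    using ab cd by (intro Rring.add Rring.mult Rring.zeta) auto
  have i2: "a * d + b * c \<in> Rring (2^(k-1))"
    using ab cd by (intro Rring.add Rring.mult) auto
  have "sig k (x * y) = (a * c + zeta (2^(k-1)) * (b * d)) - zeta (2^k) * (a * d + b * c)"
    unfolding e by (rule sig_eq[OF k i1 i2])
  also have "\<dots> = (a - zeta (2^k) * b) * (c - zeta (2^k) * d)"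
    using w by (simp add: algebra_simps) 
  finally show ?thesis using sig_eq[OF k ab(1,2)] sig_eq[OF k cd(1,2)] ab cd by simp
qed

lemma sig_one: assumes k: "2 \<le> k" shows "sig k 1 = 1"
  using sig_eq[OF k Rring.one R0] by simp

lemma sig_zero: assumes k: "2 \<le> k" shows "sig k 0 = 0"
  using sig_eq[OF k R0 R0] by simp

lemma sig_signof: assumes k: "2 \<le> k" shows "sig k (signof p) = signof p"
proof -
  from signof_cases[of p] show ?thesis
  proof
    assume h: "(signof p :: complex) = 1" show ?thesis unfolding h by (rule sig_one[OF k])
  next
    assume h: "(signof p :: complex) = -1" show ?thesis unfolding h using sig_neg[OF k Rring.one] sig_one[OF k] by simp
  qed
qed

lemma sig_sum: assumes k: "2 \<le> k"
  shows "finite S \<Longrightarrow> (\<And>x. x \<in> S \<Longrightarrow> f x \<in> Rring (2^k)) \<Longrightarrow> sig k (sum f S) = (\<Sum>x\<in>S. sig k (f x))"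
proof (induction S rule: finite_induct)
  case empty thus ?case by (simp add: sig_zero[OF k])
next
  case (insert x F)
  have "sig k (sum f (insert x F)) = sig k (f x + sum f F)" using insert by simp
  also have "\<dots> = sig k (f x) + sig k (sum f F)"
    by (rule sig_add[OF k]) (use insert in \<open>auto intro!: Rsum\<close>)
  finally show ?case using insert by simp
qed

lemma sig_prod: assumes k: "2 \<le> k"
  shows "finite S \<Longrightarrow> (\<And>x. x \<in> S \<Longrightarrow> f x \<in> Rring (2^k)) \<Longrightarrow> sig k (prod f S) = (\<Prod>x\<in>S. sig k (f x))"
proof (induction S rule: finite_induct)
  case empty thus ?case by (simp add: sig_one[OF k])
next
  case (insert x F)
  have "sig k (prod f (insert x F)) = sig k (f x * prod f F)" using insert by simp
  also have "\<dots> = sig k (f x) * sig k (prod f F)"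
    by (rule sig_mult[OF k]) (use insert in \<open>auto intro!: Rprod\<close>)
  finally show ?case using insert by simp
qed

lemma det_R: assumes M: "M \<in> carrier_mat n n" and R: "mat_over (Rring N) M"
  shows "det M \<in> Rring N"
  unfolding det_def'[OF M]
proof (rule Rsum)
  fix p assume p: "p \<in> {p. p permutes {0..<n}}"
  have "M $$ (i, p i) \<in> Rring N" if "i \<in> {0..<n}" for i
    using R M permutes_in_image[of p "{0..<n}" i] p that by (auto simp: mat_over_def)
  thus "signof p * (\<Prod>i = 0..<n. M $$ (i, p i)) \<in> Rring N"
    by (intro Rring.mult Rsignof Rprod) auto
qed (simp add: finite_permutations)

lemma sig_det: assumes k: "2 \<le> k" and M: "M \<in> carrier_mat n n" and R: "mat_over (Rring (2^k)) M"
  shows "sig k (det M) = det (map_mat (sig k) M)"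
proof -
  have ent: "M $$ (i, p i) \<in> Rring (2^k)" if "p permutes {0..<n}" "i \<in> {0..<n}" for p i
    using R M that permutes_in_image[OF that(1), of i] by (auto simp: mat_over_def)
  have "sig k (det M) = (\<Sum>p\<in>{p. p permutes {0..<n}}. sig k (signof p * (\<Prod>i = 0..<n. M $$ (i, p i))))"
    unfolding det_def'[OF M]
    by (rule sig_sum[OF k]) (auto intro!: Rring.mult Rsignof Rprod ent simp: finite_permutations)
  also have "\<dots> = (\<Sum>p\<in>{p. p permutes {0..<n}}. signof p * (\<Prod>i = 0..<n. sig k (M $$ (i, p i))))"
  proof (rule sum.cong[OF refl])
    fix p assume p: "p \<in> {p. p permutes {0..<n}}"
    have "sig k (signof p * (\<Prod>i = 0..<n. M $$ (i, p i))) = sig k (signof p) * sig k (\<Prod>i = 0..<n. M $$ (i, p i))"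
      by (rule sig_mult[OF k Rsignof Rprod]) (use p ent in auto)
    also have "\<dots> = signof p * (\<Prod>i = 0..<n. sig k (M $$ (i, p i)))"
      using sig_signof[OF k] sig_prod[OF k, of "{0..<n}" "\<lambda>i. M $$ (i, p i)"] p ent by simp
    finally show "sig k (signof p * (\<Prod>i = 0..<n. M $$ (i, p i))) = signof p * (\<Prod>i = 0..<n. sig k (M $$ (i, p i)))" .
  qed
  also have "\<dots> = det (map_mat (sig k) M)"
  proof -
    have "det (map_mat (sig k) M) = (\<Sum>p\<in>{p. p permutes {0..<n}}. signof p * (\<Prod>i = 0..<n. map_mat (sig k) M $$ (i, p i)))"
      by (rule det_def') (use M in simp)
    also have "\<dots> = (\<Sum>p\<in>{p. p permutes {0..<n}}. signof p * (\<Prod>i = 0..<n. sig k (M $$ (i, p i))))"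
    proof (intro sum.cong refl arg_cong2[where f = "(*)"] prod.cong)
      fix p i assume "p \<in> {p. p permutes {0..<n}}" "i \<in> {0..<n}"
      thus "map_mat (sig k) M $$ (i, p i) = sig k (M $$ (i, p i))"
        using M permutes_in_image[of p "{0..<n}" i] by auto
    qed
    finally show ?thesis by simp
  qed
  finally show ?thesis .
qed

lemma signof_sq: "(signof p :: complex) * signof p = 1"
  using signof_cases[of p] by auto

lemma sum_delta_c: fixes f :: "nat \<Rightarrow> complex" assumes "i < n"
  shows "(\<Sum>ia = 0..<n. c * (f ia * (if ia = i then 1 else 0))) = c * f i"
proof -
  have "(\<Sum>ia = 0..<n. c * (f ia * (if ia = i then 1 else 0))) = (\<Sum>ia\<in>{0..<n}. if ia = i then c * f ia else 0)"
    by (rule sum.cong) auto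
  also have "\<dots> = c * f i" using assms by (simp add: sum.delta')
  finally show ?thesis .
qed

lemma det_perm_sim: fixes A :: "complex mat" assumes A: "A \<in> carrier_mat n n" and p: "p permutes {0..<n}"
  shows "det (mat n n (\<lambda>(i,j). A $$ (p i, p j))) = det A"
proof -
  define B1 where "B1 = mat n n (\<lambda>(i,j). A $$ (p i, j))"
  have B1c: "B1 \<in> carrier_mat n n" unfolding B1_def by simp
  have d1: "det B1 = signof p * det A" unfolding B1_def by (rule det_permute_rows[OF A p])
  define B2 where "B2 = mat n n (\<lambda>(i,j). transpose_mat B1 $$ (p i, j))"
  have d2: "det B2 = signof p * det (transpose_mat B1)" unfolding B2_def
    by (rule det_permute_rows[OF _ p]) (use B1c in simp)
  have B2c: "B2 \<in> carrier_mat n n" unfolding B2_def by simp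
  have eq: "mat n n (\<lambda>(i,j). A $$ (p i, p j)) = transpose_mat B2"
    by (rule eq_matI) (use p in \<open>auto simp: B2_def B1_def permutes_in_image[OF p]\<close>)
  have "det (mat n n (\<lambda>(i,j). A $$ (p i, p j))) = det B2" unfolding eq by (rule det_transpose[OF B2c])
  also have "\<dots> = signof p * signof p * det A" using d2 d1 det_transpose[OF B1c] by simp
  finally show ?thesis using signof_sq[of p] by simp
qed

lemma block_det: fixes A B :: "complex mat"
  assumes A: "A \<in> carrier_mat n n" and B: "B \<in> carrier_mat n n"
  shows "det (four_block_mat A B ((c*c) \<cdot>\<^sub>m B) A) = det (A + c \<cdot>\<^sub>m B) * det (A + (-c) \<cdot>\<^sub>m B)"
proof -
  define L where "L = four_block_mat (1\<^sub>m n) (0\<^sub>m n n) (c \<cdot>\<^sub>m 1\<^sub>m n) (1\<^sub>m n)"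
  define F where "F = four_block_mat A B ((c*c) \<cdot>\<^sub>m B) A"
  define D where "D = A + c \<cdot>\<^sub>m B"
  define E where "E = A + (-c) \<cdot>\<^sub>m B"
  have Lc: "L \<in> carrier_mat (n+n) (n+n)" unfolding L_def by (rule four_block_carrier_mat) auto
  have Fc: "F \<in> carrier_mat (n+n) (n+n)" unfolding F_def using A B by (intro four_block_carrier_mat) auto
  have Dc: "D \<in> carrier_mat n n" unfolding D_def using A B by simp
  have Ec: "E \<in> carrier_mat n n" unfolding E_def using A B by simp
  have dL: "det L = 1" unfolding L_def
    by (subst det_four_block_mat_upper_right_zero[of _ n _ n]) auto
  have LF: "L * F = four_block_mat A B (c \<cdot>\<^sub>m D) D"
    unfolding L_def F_def
    by (subst mult_four_block_mat[of _ n n _ n _ n]) (use A B in \<open>auto intro!: eq_matI simp: D_def algebra_simps scalar_prod_def sum_distrib_left sum_delta_c\<close>)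
  have "det F = det (L * F)" using det_mult[OF Lc Fc] dL by simp
  also have "\<dots> = det (A * D - B * (c \<cdot>\<^sub>m D))" unfolding LF
    by (rule det_four_block_mat[OF A B]) (use Dc in \<open>auto simp: mult_smult_distrib mult_smult_assoc_mat\<close>)
  also have "A * D - B * (c \<cdot>\<^sub>m D) = E * D"
    by (rule eq_matI) (use A B Dc in \<open>auto simp: E_def scalar_prod_def sum_subtractf sum_distrib_left algebra_simps sum_negf\<close>)
  also have "det (E * D) = det E * det D" by (rule det_mult[OF Ec Dc])
  finally show ?thesis unfolding F_def D_def E_def by simp
qed

definition pi2 :: "nat \<Rightarrow> nat \<Rightarrow> nat" where
  "pi2 n i = (if i < n then 2 * i else if i < n + n then 2 * (i - n) + 1 else i)"

lemma pi2_permutes: "pi2 n permutes {0..<n+n}"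
proof (rule bij_imp_permutes)
  have inj: "inj_on (pi2 n) {0..<n+n}"
    by (rule inj_onI) (auto simp: pi2_def split: if_splits; presburger)
  have sub: "pi2 n ` {0..<n+n} \<subseteq> {0..<n+n}" by (auto simp: pi2_def)
  show "bij_betw (pi2 n) {0..<n+n} {0..<n+n}"
    unfolding bij_betw_def using inj endo_inj_surj[OF _ sub inj] by simp
qed (auto simp: pi2_def)

lemma Lambda_idx: "a < 2 \<Longrightarrow> b < 2 \<Longrightarrow> Lambda k $$ (a, b) =
  (if a = 0 then (if b = 0 then 0 else 1) else (if b = 0 then zeta (2^(k-1)) else 0))"
  by (auto simp: Lambda_def mat_of_rows_list_def less_2_cases_iff)

lemma Lambda_dim[simp]: "dim_row (Lambda k) = 2" "dim_col (Lambda k) = 2"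
  by (auto simp: Lambda_def mat_of_rows_list_def)

lemma phi_det_kron: fixes A B :: "complex mat"
  assumes A: "A \<in> carrier_mat n n" and B: "B \<in> carrier_mat n n" and c: "zeta (2^(k-1)) = c * c"
  shows "det (kron A (1\<^sub>m 2) + kron B (Lambda k)) = det (A + c \<cdot>\<^sub>m B) * det (A + (-c) \<cdot>\<^sub>m B)"
proof -
  define Phi where "Phi = kron A (1\<^sub>m 2) + kron B (Lambda k)"
  have Phic: "Phi \<in> carrier_mat (n+n) (n+n)" unfolding Phi_def kron_def using A B by auto
  have idx: "Phi $$ (r, s) = A $$ (r div 2, s div 2) * (if r mod 2 = s mod 2 then 1 else 0)
     + B $$ (r div 2, s div 2) * Lambda k $$ (r mod 2, s mod 2)" if "r < n+n" "s < n+n" for r s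
    using that A B unfolding Phi_def kron_def by auto
  have F: "four_block_mat A B ((c*c) \<cdot>\<^sub>m B) A = mat (n+n) (n+n) (\<lambda>(i,j). Phi $$ (pi2 n i, pi2 n j))"
  proof (rule eq_matI)
    fix i j assume i: "i < dim_row (mat (n+n) (n+n) (\<lambda>(i,j). Phi $$ (pi2 n i, pi2 n j)))"
      and j: "j < dim_col (mat (n+n) (n+n) (\<lambda>(i,j). Phi $$ (pi2 n i, pi2 n j)))"
    have i': "i < n + n" and j': "j < n + n" using i j by auto
    have pr: "pi2 n i < n + n" "pi2 n j < n + n" using i' j' by (auto simp: pi2_def)
    show "four_block_mat A B ((c*c) \<cdot>\<^sub>m B) A $$ (i, j) = mat (n+n) (n+n) (\<lambda>(i,j). Phi $$ (pi2 n i, pi2 n j)) $$ (i, j)"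
      using i' j' A B idx[OF pr] c by (auto simp: pi2_def Lambda_idx)
  qed (use A B in auto)
  have "det (four_block_mat A B ((c*c) \<cdot>\<^sub>m B) A) = det Phi"
    unfolding F by (rule det_perm_sim[OF Phic pi2_permutes])
  thus ?thesis using block_det[OF A B, of c] unfolding Phi_def by simp
qed


lemma phi_eq: assumes k: "2 \<le> k" and M: "M \<in> carrier_mat n n" and R: "mat_over (Rring (2^k)) M"
  shows "phi k M = kron (map_mat (\<lambda>x. fst (pab k x)) M) (1\<^sub>m 2) + kron (map_mat (\<lambda>x. snd (pab k x)) M) (Lambda k)"
proof -
  define A where "A = map_mat (\<lambda>x. fst (pab k x)) M"
  define B where "B = map_mat (\<lambda>x. snd (pab k x)) M"
  have ent: "M $$ (i, j) \<in> Rring (2^k)" if "i < n" "j < n" for i j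
    using R M that by (auto simp: mat_over_def)
  have ex: "\<exists>A' B'. A' \<in> carrier_mat (dim_row M) (dim_col M) \<and>
       B' \<in> carrier_mat (dim_row M) (dim_col M) \<and>
       mat_over (Rring (2^(k-1))) A' \<and> mat_over (Rring (2^(k-1))) B' \<and>
       M = A' + zeta (2^k) \<cdot>\<^sub>m B' \<and>
       kron A (1\<^sub>m 2) + kron B (Lambda k) = kron A' (1\<^sub>m 2) + kron B' (Lambda k)"
  proof (intro exI conjI)
    show "A \<in> carrier_mat (dim_row M) (dim_col M)" "B \<in> carrier_mat (dim_row M) (dim_col M)"
      unfolding A_def B_def by auto
    show "mat_over (Rring (2^(k-1))) A" "mat_over (Rring (2^(k-1))) B"
      unfolding A_def B_def mat_over_def using pab_ok[OF k] ent M by auto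
    show "M = A + zeta (2^k) \<cdot>\<^sub>m B"
      by (rule eq_matI) (use M pab_ok[OF k] ent in \<open>auto simp: A_def B_def\<close>)
  qed simp
  show ?thesis unfolding phi_def A_def[symmetric] B_def[symmetric]
  proof (rule the_equality)
    fix P assume "\<exists>A' B'. A' \<in> carrier_mat (dim_row M) (dim_col M) \<and>
       B' \<in> carrier_mat (dim_row M) (dim_col M) \<and>
       mat_over (Rring (2^(k-1))) A' \<and> mat_over (Rring (2^(k-1))) B' \<and>
       M = A' + zeta (2^k) \<cdot>\<^sub>m B' \<and> P = kron A' (1\<^sub>m 2) + kron B' (Lambda k)"
    then obtain A' B' where A'c: "A' \<in> carrier_mat n n" and B'c: "B' \<in> carrier_mat n n"
      and oA: "mat_over (Rring (2^(k-1))) A'" and oB: "mat_over (Rring (2^(k-1))) B'"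
      and MAB: "M = A' + zeta (2^k) \<cdot>\<^sub>m B'" and P: "P = kron A' (1\<^sub>m 2) + kron B' (Lambda k)"
      using M by auto
    have pe: "pab k (M $$ (i, j)) = (A' $$ (i, j), B' $$ (i, j))" if "i < n" "j < n" for i j
    proof -
      have "M $$ (i, j) = A' $$ (i, j) + zeta (2^k) * B' $$ (i, j)"
        using MAB A'c B'c that by simp
      thus ?thesis using pab_eq[OF k, of "A' $$ (i, j)" "B' $$ (i, j)"] oA oB A'c B'c that
        by (simp add: mat_over_def)
    qed
    have "A' = A" by (rule eq_matI) (use A'c M pe in \<open>auto simp: A_def\<close>)
    moreover have "B' = B" by (rule eq_matI) (use B'c M pe in \<open>auto simp: B_def\<close>)
    ultimately show "P = kron A (1\<^sub>m 2) + kron B (Lambda k)" using P by simp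
  qed (use ex in auto)
qed

lemma det_phi: assumes k: "2 \<le> k" and M: "M \<in> carrier_mat n n" and R: "mat_over (Rring (2^k)) M"
  shows "det (phi k M) = det M * sig k (det M)"
proof -
  define A where "A = map_mat (\<lambda>x. fst (pab k x)) M"
  define B where "B = map_mat (\<lambda>x. snd (pab k x)) M"
  have ent: "M $$ (i, j) \<in> Rring (2^k)" if "i < n" "j < n" for i j
    using R M that by (auto simp: mat_over_def)
  have Ac: "A \<in> carrier_mat n n" and Bc: "B \<in> carrier_mat n n" using M by (auto simp: A_def B_def)
  have c: "zeta (2^(k-1)) = zeta (2^k) * zeta (2^k)" using zeta_sq[of k] k by (simp add: power2_eq_square)
  have "det (phi k M) = det (A + zeta (2^k) \<cdot>\<^sub>m B) * det (A + (- zeta (2^k)) \<cdot>\<^sub>m B)"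
    unfolding phi_eq[OF k M R] A_def[symmetric] B_def[symmetric] by (rule phi_det_kron[OF Ac Bc c])
  also have "A + zeta (2^k) \<cdot>\<^sub>m B = M"
    by (rule eq_matI) (use M pab_ok[OF k] ent in \<open>auto simp: A_def B_def\<close>)
  also have "A + (- zeta (2^k)) \<cdot>\<^sub>m B = map_mat (sig k) M"
    by (rule eq_matI) (use M in \<open>auto simp: A_def B_def sig_def\<close>)
  also have "det (map_mat (sig k) M) = sig k (det M)" using sig_det[OF k M R] by simp
  finally show ?thesis .
qed

theorem corollary5p2:
  fixes k n :: nat and U :: "complex mat"
  assumes "k \<ge> 2"
    and "U \<in> carrier_mat n n"
    and "unitary_mat U"
    and "mat_over (Rring (2^k)) U"
  shows "det (phi k U) = det (phi k (mat 1 1 (\<lambda>_. det U)))"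
proof -
  have dR: "det U \<in> Rring (2^k)" by (rule det_R[OF assms(2) assms(4)])
  have c1: "mat 1 1 (\<lambda>_. det U) \<in> carrier_mat 1 1" by simp
  have o1: "mat_over (Rring (2^k)) (mat 1 1 (\<lambda>_. det U))" using dR by (simp add: mat_over_def)
  have d1: "det (mat 1 1 (\<lambda>_. det U)) = det U" by (subst det_single[OF c1]) simp
  show ?thesis unfolding det_phi[OF assms(1) assms(2) assms(4)] det_phi[OF assms(1) c1 o1] d1 ..
qed

end
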